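(* The map $\pi^\infty:J^\infty_0(\mathbb C^p,V)/G\to J^\infty_0(\mathbb C^p,Z)$ is injective: if $F_1,F_2:\mathbb C[V]\to\mathbb C[[X_1,\dots,X_p]]$ are $\mathbb C$-algebra homomorphisms with $F_1|_{\mathbb C[V]^G}=F_2|_{\mathbb C[V]^G}$, then there is $g\in G$ with $F_2=F_1\circ g^*$, where $g^*\varphi=\varphi\circ g$.
   Context: $V$ is a finite-dimensional complex vector space, $G\subset GL(V)$ a finite group, $Z=V/G$ the orbit space with $\mathbb C[Z]=\mathbb C[V]^G$ and quotient map $\pi$. $J^\infty_0(\mathbb C^p,X)$ denotes the set of $\mathbb C$-algebra homomorphisms $\mathbb C[X]\to\mathbb C[[X_1,\dots,X_p]]$ (formal morphisms); $G$ acts on $J^\infty_0(\mathbb C^p,V)$ through its action on $\mathbb C[V]$, and $\pi^\infty$ is induced by restriction to $\mathbb C[V]^G$. *)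

theory Defs
  imports Complex_Main
begin

text \<open>The coordinate ring C[V] is modelled as the ring of polynomial functions on V
  (isomorphic to the polynomial ring since C is infinite), with pointwise operations.\<close>

inductive_set poly_fun :: "(('n::finite \<Rightarrow> complex) \<Rightarrow> complex) set" where
  const: "(\<lambda>x. c) \<in> poly_fun"
| coord: "(\<lambda>x. x i) \<in> poly_fun"
| add: "f \<in> poly_fun \<Longrightarrow> g \<in> poly_fun \<Longrightarrow> (\<lambda>x. f x + g x) \<in> poly_fun"
| mult: "f \<in> poly_fun \<Longrightarrow> g \<in> poly_fun \<Longrightarrow> (\<lambda>x. f x * g x) \<in> poly_fun"

text \<open>Formal power series in variables indexed by the finite type 'p:
  a series is a function from exponent vectors ('p => nat) to coefficients.\<close>

type_synonym 'p fps_multi = "('p \<Rightarrow> nat) \<Rightarrow> complex"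

definition ps_const :: "complex \<Rightarrow> ('p::finite) fps_multi" where
  "ps_const c = (\<lambda>m. if m = (\<lambda>_. 0) then c else 0)"

definition ps_add :: "('p::finite) fps_multi \<Rightarrow> 'p fps_multi \<Rightarrow> 'p fps_multi" where
  "ps_add f g = (\<lambda>m. f m + g m)"

definition ps_mult :: "('p::finite) fps_multi \<Rightarrow> 'p fps_multi \<Rightarrow> 'p fps_multi" where
  "ps_mult f g = (\<lambda>m. \<Sum>(a, b) \<in> {(a, b). (\<lambda>i. a i + b i) = m}. f a * g b)"

definition formal_morphism ::
  "((('n::finite \<Rightarrow> complex) \<Rightarrow> complex) \<Rightarrow> ('p::finite) fps_multi) \<Rightarrow> bool" where
  "formal_morphism F \<longleftrightarrow>
     (\<forall>c. F (\<lambda>x. c) = ps_const c) \<and>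
     (\<forall>f\<in>poly_fun. \<forall>g\<in>poly_fun. F (\<lambda>x. f x + g x) = ps_add (F f) (F g)) \<and>
     (\<forall>f\<in>poly_fun. \<forall>g\<in>poly_fun. F (\<lambda>x. f x * g x) = ps_mult (F f) (F g))"

definition clinear_map :: "(('n::finite \<Rightarrow> complex) \<Rightarrow> ('n \<Rightarrow> complex)) \<Rightarrow> bool" where
  "clinear_map g \<longleftrightarrow>
     (\<forall>x y. g (\<lambda>i. x i + y i) = (\<lambda>i. g x i + g y i)) \<and>
     (\<forall>c x. g (\<lambda>i. c * x i) = (\<lambda>i. c * g x i))"

definition finite_GL_subgroup :: "(('n::finite \<Rightarrow> complex) \<Rightarrow> ('n \<Rightarrow> complex)) set \<Rightarrow> bool" where
  "finite_GL_subgroup G \<longleftrightarrow>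
     finite G \<and> (\<forall>g\<in>G. clinear_map g \<and> bij g) \<and> id \<in> G \<and>
     (\<forall>g\<in>G. \<forall>h\<in>G. g \<circ> h \<in> G) \<and> (\<forall>g\<in>G. inv g \<in> G)"

definition invariants :: "(('n::finite \<Rightarrow> complex) \<Rightarrow> ('n \<Rightarrow> complex)) set \<Rightarrow> (('n \<Rightarrow> complex) \<Rightarrow> complex) set" where
  "invariants G = {f \<in> poly_fun. \<forall>g\<in>G. f \<circ> g = f}"

definition pullback :: "(('n \<Rightarrow> complex) \<Rightarrow> ('n \<Rightarrow> complex)) \<Rightarrow> (('n \<Rightarrow> complex) \<Rightarrow> complex) \<Rightarrow> (('n \<Rightarrow> complex) \<Rightarrow> complex)" where
  "pullback g f = f \<circ> g"

end

theory Submission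
  imports Defs "HOL-Library.FuncSet" "HOL-Computational_Algebra.Polynomial"
begin


definition PS :: "('p::finite \<Rightarrow> nat) \<Rightarrow> (('p \<Rightarrow> nat) \<times> ('p \<Rightarrow> nat)) set" where
  "PS m = {(a, b). (\<lambda>i. a i + b i) = m}"

lemma finite_box: "finite {a::'p::finite\<Rightarrow>nat. \<forall>i. a i \<le> m i}"
proof -
  have "{a::'p\<Rightarrow>nat. \<forall>i. a i \<le> m i} = Pi\<^sub>E UNIV (\<lambda>i. {..m i})"
    by (auto simp: PiE_UNIV_domain Pi_def)
  then show ?thesis by (simp add: finite_PiE)
qed

lemma finite_PS: "finite (PS m)"
proof -
  have "PS m \<subseteq> {a. \<forall>i. a i \<le> m i} \<times> {a. \<forall>i. a i \<le> m i}"
    by (auto simp: PS_def)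
  then show ?thesis using finite_box finite_subset by blast
qed

lemma ps_mult_PS: "ps_mult f g m = (\<Sum>(a, b)\<in>PS m. f a * g b)"
  by (simp add: ps_mult_def PS_def)

lemma ps_mult_comm: "ps_mult f g = ps_mult g f"
proof
  fix m
  show "ps_mult f g m = ps_mult g f m"
    unfolding ps_mult_PS
    by (rule sum.reindex_bij_witness[where i="\<lambda>(a,b). (b,a)" and j="\<lambda>(a,b). (b,a)"])
       (auto simp: PS_def add.commute mult.commute)
qed

lemma ps_mult_one: "ps_mult (ps_const 1) f = f"
proof
  fix m
  have "ps_mult (ps_const 1) f m = (\<Sum>p\<in>PS m. if p = ((\<lambda>_. 0), m) then f m else 0)"
    unfolding ps_mult_PS
    by (rule sum.cong) (auto simp: PS_def ps_const_def split: if_splits)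
  also have "\<dots> = f m" by (simp only: sum.delta[OF finite_PS]) (simp add: PS_def)
  finally show "ps_mult (ps_const 1) f m = f m" .
qed

lemma ps_mult_const: "ps_mult (ps_const c) f = (\<lambda>m. c * f m)"
proof
  fix m
  have "ps_mult (ps_const c) f m = (\<Sum>p\<in>PS m. if p = ((\<lambda>_. 0), m) then c * f m else 0)"
    unfolding ps_mult_PS
    by (rule sum.cong) (auto simp: PS_def ps_const_def split: if_splits)
  also have "\<dots> = c * f m" by (simp only: sum.delta[OF finite_PS]) (simp add: PS_def)
  finally show "ps_mult (ps_const c) f m = c * f m" .
qed

lemma ps_mult_distrib: "ps_mult (ps_add f g) h = ps_add (ps_mult f h) (ps_mult g h)"
  unfolding ps_add_def ps_mult_PS
  by (auto simp: sum.distrib[symmetric] distrib_right intro!: sum.cong)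

lemma ps_mult_assoc: "ps_mult (ps_mult f g) h = ps_mult f (ps_mult g h)"
proof
  fix m
  have "ps_mult (ps_mult f g) h m = (\<Sum>(a,b)\<in>PS m. \<Sum>(c,d)\<in>PS a. f c * g d * h b)"
    unfolding ps_mult_PS by (simp add: sum_distrib_right case_prod_unfold)
  also have "\<dots> = (\<Sum>(x,y)\<in>Sigma (PS m) (\<lambda>(a,b). PS a). f (fst y) * g (snd y) * h (snd x))"
    by (subst sum.Sigma[symmetric]) (auto simp: finite_PS case_prod_unfold)
  also have "\<dots> = (\<Sum>(x,y)\<in>Sigma (PS m) (\<lambda>(a,b). PS b). f (fst x) * g (fst y) * h (snd y))"
    apply (rule sum.reindex_bij_witness[where j="\<lambda>((a,b),(c,d)). ((c, \<lambda>i. d i + b i), (d, b))"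
          and i="\<lambda>((a,b),(c,d)). ((\<lambda>i. a i + c i, d), (a, c))"])
    apply (auto simp: PS_def fun_eq_iff add.assoc)
    by (metis add.assoc)
  also have "\<dots> = (\<Sum>(a,b)\<in>PS m. \<Sum>(c,d)\<in>PS b. f a * g c * h d)"
    by (subst sum.Sigma[symmetric]) (auto simp: finite_PS case_prod_unfold)
  also have "\<dots> = ps_mult f (ps_mult g h) m"
    unfolding ps_mult_PS by (simp add: sum_distrib_left case_prod_unfold mult.assoc)
  finally show "ps_mult (ps_mult f g) h m = ps_mult f (ps_mult g h) m" .
qed



fun lle :: "'p list \<Rightarrow> ('p\<Rightarrow>nat) \<Rightarrow> ('p\<Rightarrow>nat) \<Rightarrow> bool" where
  "lle [] a b = True"
| "lle (x#xs) a b = (a x < b x \<or> (a x = b x \<and> lle xs a b))"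

fun llt :: "'p list \<Rightarrow> ('p\<Rightarrow>nat) \<Rightarrow> ('p\<Rightarrow>nat) \<Rightarrow> bool" where
  "llt [] a b = False"
| "llt (x#xs) a b = (a x < b x \<or> (a x = b x \<and> llt xs a b))"

lemma lle_cases: "lle xs a b \<Longrightarrow> (\<forall>x\<in>set xs. a x = b x) \<or> llt xs a b"
  by (induction xs) auto

lemma llt_add: "llt xs a c \<Longrightarrow> lle xs b d \<Longrightarrow> llt xs (\<lambda>i. a i + b i) (\<lambda>i. c i + d i)"
  by (induction xs) auto

lemma llt_irrefl: "\<not> llt xs a a"
  by (induction xs) auto

lemma lle_min: "S \<noteq> {} \<Longrightarrow> \<exists>a\<in>S. \<forall>b\<in>S. lle xs a b"
proof (induction xs arbitrary: S)
  case Nil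
  then show ?case by auto
next
  case (Cons x xs)
  define k where "k = (LEAST k. \<exists>a\<in>S. a x = k)"
  obtain a1 where "a1 \<in> S" using Cons.prems by blast
  have ex: "\<exists>a\<in>S. a x = k" unfolding k_def
    by (rule LeastI[of "\<lambda>k. \<exists>a\<in>S. a x = k" "a1 x"]) (use \<open>a1 \<in> S\<close> in blast)
  have kle: "\<And>b. b \<in> S \<Longrightarrow> k \<le> b x" unfolding k_def
    by (rule Least_le) blast
  define S' where "S' = {a\<in>S. a x = k}"
  have "S' \<noteq> {}" using ex S'_def by auto
  from Cons.IH[OF this] obtain a where a: "a \<in> S'" "\<forall>b\<in>S'. lle xs a b" by blast
  show ?case
  proof (intro bexI[of _ a] ballI)
    fix b assume b: "b \<in> S"
    show "lle (x # xs) a b"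
    proof (cases "b x = k")
      case True
      then show ?thesis using a b S'_def by auto
    next
      case False
      then show ?thesis using a b S'_def kle[OF b] by auto
    qed
  qed (use a S'_def in auto)
qed

definition enum_p :: "'p::finite list" where
  "enum_p = (SOME xs. set xs = UNIV)"

lemma set_enum_p: "set (enum_p :: 'p::finite list) = UNIV"
  unfolding enum_p_def by (rule someI_ex) (simp add: finite_list)

lemma ps_domain:
  fixes f g :: "('p::finite) fps_multi"
  assumes "ps_mult f g = (\<lambda>_. 0)" and "f \<noteq> (\<lambda>_. 0)"
  shows "g = (\<lambda>_. 0)"
proof (rule ccontr)
  assume gnz: "g \<noteq> (\<lambda>_. 0)"
  let ?xs = "enum_p :: 'p list"
  obtain a0 where a0: "f a0 \<noteq> 0" "\<forall>a. f a \<noteq> 0 \<longrightarrow> lle ?xs a0 a"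
    using lle_min[of "{a. f a \<noteq> 0}" ?xs] assms(2) by auto
  obtain b0 where b0: "g b0 \<noteq> 0" "\<forall>b. g b \<noteq> 0 \<longrightarrow> lle ?xs b0 b"
    using lle_min[of "{b. g b \<noteq> 0}" ?xs] gnz by auto
  define m where "m = (\<lambda>i. a0 i + b0 i)"
  have "ps_mult f g m = (\<Sum>p\<in>PS m. if p = (a0, b0) then f a0 * g b0 else 0)"
    unfolding ps_mult_PS
  proof (rule sum.cong[OF refl], clarify)
    fix a b assume ab: "(a, b) \<in> PS m"
    show "f a * g b = (if (a, b) = (a0, b0) then f a0 * g b0 else 0)"
    proof (cases "f a \<noteq> 0 \<and> g b \<noteq> 0")
      case True
      then have l1: "lle ?xs a0 a" and l2: "lle ?xs b0 b" using a0 b0 by auto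
      from lle_cases[OF l1] show ?thesis
      proof
        assume "\<forall>x\<in>set ?xs. a0 x = a x"
        then have "a = a0" using set_enum_p by (metis UNIV_I ext)
        moreover then have "b = b0" using ab by (auto simp: PS_def m_def fun_eq_iff)
        ultimately show ?thesis by simp
      next
        assume "llt ?xs a0 a"
        from llt_add[OF this l2] have "llt ?xs m m" using ab by (auto simp: PS_def m_def)
        then show ?thesis using llt_irrefl by blast
      qed
    qed auto
  qed
  also have "\<dots> = f a0 * g b0"
    by (simp only: sum.delta[OF finite_PS]) (simp add: PS_def m_def)
  finally have "ps_mult f g m \<noteq> 0" using a0 b0 by simp
  then show False using assms(1) by simp
qed

datatype 'p mps = MPS (cf: "('p \<Rightarrow> nat) \<Rightarrow> complex")

instantiation mps :: (finite) idom
begin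
definition "zero_mps = MPS (\<lambda>_. 0)"
definition "one_mps = MPS (ps_const 1)"
definition "plus_mps a b = MPS (ps_add (cf a) (cf b))"
definition "times_mps a b = MPS (ps_mult (cf a) (cf b))"
definition "uminus_mps a = MPS (\<lambda>m. - cf a m)"
definition "minus_mps a b = MPS (\<lambda>m. cf a m - cf b m)"
instance
proof
  fix a b c :: "'a mps"
  show "a * b * c = a * (b * c)" by (simp add: times_mps_def ps_mult_assoc)
  show "a * b = b * a" by (simp add: times_mps_def ps_mult_comm)
  show "1 * a = a" by (simp add: times_mps_def one_mps_def ps_mult_one)
  show "a + b + c = a + (b + c)" by (simp add: plus_mps_def ps_add_def add.assoc)
  show "a + b = b + a" by (simp add: plus_mps_def ps_add_def add.commute)
  show "0 + a = a" by (simp add: plus_mps_def ps_add_def zero_mps_def)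
  show "- a + a = 0" by (simp add: plus_mps_def ps_add_def zero_mps_def uminus_mps_def)
  show "a - b = a + - b" by (simp add: plus_mps_def ps_add_def minus_mps_def uminus_mps_def)
  show "(a + b) * c = a * c + b * c" by (simp add: plus_mps_def times_mps_def ps_mult_distrib)
  show "a * (b + c) = a * b + a * c" by (simp add: plus_mps_def times_mps_def ps_mult_comm[of "cf a"] ps_mult_distrib)
  have z: "ps_mult (\<lambda>_. 0) f = (\<lambda>_. 0)" for f :: "'a fps_multi"
    by (simp add: ps_mult_def)
  show "0 * a = 0" by (simp add: times_mps_def zero_mps_def z)
  show "a * 0 = 0" by (simp add: times_mps_def zero_mps_def z ps_mult_comm)
  show "(0::'a mps) \<noteq> 1"
    by (auto simp: zero_mps_def one_mps_def ps_const_def fun_eq_iff)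
  show "a \<noteq> 0 \<Longrightarrow> b \<noteq> 0 \<Longrightarrow> a * b \<noteq> 0"
    using ps_domain[of "cf a" "cf b"]
    by (cases a; cases b) (auto simp: zero_mps_def times_mps_def)
qed
end



lemma pf_sum: "finite S \<Longrightarrow> (\<And>s. s \<in> S \<Longrightarrow> h s \<in> poly_fun) \<Longrightarrow> (\<lambda>x. \<Sum>s\<in>S. h s x) \<in> poly_fun"
proof (induction S rule: finite_induct)
  case empty
  then show ?case using poly_fun.const[of 0] by simp
next
  case (insert s S)
  then show ?case using poly_fun.add[of "h s" "\<lambda>x. \<Sum>s\<in>S. h s x"] by simp
qed

lemma pf_prod: "finite S \<Longrightarrow> (\<And>s. s \<in> S \<Longrightarrow> h s \<in> poly_fun) \<Longrightarrow> (\<lambda>x. \<Prod>s\<in>S. h s x) \<in> poly_fun"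
proof (induction S rule: finite_induct)
  case empty
  then show ?case using poly_fun.const[of 1] by simp
next
  case (insert s S)
  then show ?case using poly_fun.mult[of "h s" "\<lambda>x. \<Prod>s\<in>S. h s x"] by simp
qed

lemma pf_pow: "f \<in> poly_fun \<Longrightarrow> (\<lambda>x. f x ^ n) \<in> poly_fun"
proof (induction n)
  case 0
  then show ?case using poly_fun.const[of 1] by simp
next
  case (Suc n)
  then show ?case using poly_fun.mult[of f "\<lambda>x. f x ^ n"] by simp
qed

lemma pf_scale: "f \<in> poly_fun \<Longrightarrow> (\<lambda>x. c * f x) \<in> poly_fun"
  by (rule poly_fun.mult[OF poly_fun.const])

lemma clinear_zero: "clinear_map g \<Longrightarrow> g (\<lambda>i. 0) = (\<lambda>i. 0)"
proof -
  assume "clinear_map g"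
  then have "g (\<lambda>i. 0 * x i) = (\<lambda>i. 0 * g x i)" for x unfolding clinear_map_def by blast
  then show ?thesis by simp
qed

lemma clinear_sum:
  assumes "clinear_map g" "finite S"
  shows "g (\<lambda>i. \<Sum>j\<in>S. c j * v j i) = (\<lambda>i. \<Sum>j\<in>S. c j * g (v j) i)"
  using assms(2)
proof (induction S rule: finite_induct)
  case empty
  then show ?case using clinear_zero[OF assms(1)] by simp
next
  case (insert j S)
  have "g (\<lambda>i. \<Sum>j\<in>insert j S. c j * v j i) = g (\<lambda>i. c j * v j i + (\<Sum>j\<in>S. c j * v j i))"
    using insert by simp
  also have "\<dots> = (\<lambda>i. g (\<lambda>i. c j * v j i) i + g (\<lambda>i. \<Sum>j\<in>S. c j * v j i) i)"
  proof -
    have add: "\<And>x y. g (\<lambda>i. x i + y i) = (\<lambda>i. g x i + g y i)"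
      using assms(1) unfolding clinear_map_def by blast
    show ?thesis using add[of "\<lambda>i. c j * v j i" "\<lambda>i. \<Sum>j\<in>S. c j * v j i"] by simp
  qed
  also have "\<dots> = (\<lambda>i. c j * g (v j) i + (\<Sum>j\<in>S. c j * g (v j) i))"
    using assms(1) insert.IH unfolding clinear_map_def by simp
  finally show ?case using insert by simp
qed

lemma clinear_coord:
  fixes g :: "('n::finite \<Rightarrow> complex) \<Rightarrow> ('n \<Rightarrow> complex)"
  assumes "clinear_map g"
  shows "(\<lambda>x. g x i) = (\<lambda>x. \<Sum>j\<in>UNIV. x j * g (\<lambda>k. if k = j then 1 else 0) i)"
proof
  fix x :: "'n \<Rightarrow> complex"
  have "x = (\<lambda>i. \<Sum>j\<in>UNIV. x j * (\<lambda>k. if k = j then 1 else 0) i)"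
  proof
    fix i
    have "(\<Sum>j\<in>UNIV. x j * (\<lambda>k. if k = j then 1 else 0) i) = (\<Sum>j\<in>UNIV. if i = j then x j else 0)"
      by (rule sum.cong) auto
    also have "\<dots> = x i" by (subst sum.delta') simp_all
    finally show "x i = (\<Sum>j\<in>UNIV. x j * (\<lambda>k. if k = j then 1 else 0) i)" by simp
  qed
  then have "g x = g (\<lambda>i. \<Sum>j\<in>UNIV. x j * (\<lambda>k. if k = j then 1 else 0) i)" by simp
  also have "\<dots> = (\<lambda>i. \<Sum>j\<in>UNIV. x j * g (\<lambda>k. if k = j then 1 else 0) i)"
    by (rule clinear_sum[OF assms finite_UNIV])
  finally show "g x i = (\<Sum>j\<in>UNIV. x j * g (\<lambda>k. if k = j then 1 else 0) i)" by simp
qed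

lemma pf_comp:
  assumes "clinear_map g" "f \<in> poly_fun"
  shows "(\<lambda>x. f (g x)) \<in> poly_fun"
  using assms(2)
proof (induction f rule: poly_fun.induct)
  case (coord i)
  show ?case
    by (subst clinear_coord[OF assms(1)])
       (rule pf_sum, simp, rule poly_fun.mult[OF poly_fun.coord poly_fun.const])
next
  case (const c)
  then show ?case by (rule poly_fun.const)
next
  case (add f g)
  then show ?case using poly_fun.add by blast
next
  case (mult f g)
  then show ?case using poly_fun.mult by blast
qed

definition Phi :: "(((('n::finite \<Rightarrow> complex) \<Rightarrow> complex) \<Rightarrow> ('p::finite) fps_multi)) \<Rightarrow> (('n \<Rightarrow> complex) \<Rightarrow> complex) \<Rightarrow> 'p mps" where
  "Phi F f = MPS (F f)"


lemma ps_const_0: "MPS (ps_const 0 :: ('p::finite) fps_multi) = 0"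
  by (simp add: ps_const_def zero_mps_def)

lemma ps_const_1: "MPS (ps_const 1 :: ('p::finite) fps_multi) = 1"
  by (simp add: one_mps_def)

lemma ps_const_m1: "MPS (ps_const (-1) :: ('p::finite) fps_multi) = -1"
  by (simp add: one_mps_def uminus_mps_def ps_const_def fun_eq_iff)

context
  fixes F :: "(('n::finite \<Rightarrow> complex) \<Rightarrow> complex) \<Rightarrow> ('p::finite) fps_multi"
  assumes F: "formal_morphism F"
begin

lemma hom_const: "Phi F (\<lambda>x. c) = MPS (ps_const c)"
  using F by (simp add: Phi_def formal_morphism_def)

lemma hom_add: "f \<in> poly_fun \<Longrightarrow> g \<in> poly_fun \<Longrightarrow> Phi F (\<lambda>x. f x + g x) = Phi F f + Phi F g"
  using F by (simp add: Phi_def formal_morphism_def plus_mps_def)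

lemma hom_mult: "f \<in> poly_fun \<Longrightarrow> g \<in> poly_fun \<Longrightarrow> Phi F (\<lambda>x. f x * g x) = Phi F f * Phi F g"
  using F by (simp add: Phi_def formal_morphism_def times_mps_def)

lemma hom_sum: "finite S \<Longrightarrow> (\<And>s. s \<in> S \<Longrightarrow> h s \<in> poly_fun) \<Longrightarrow> Phi F (\<lambda>x. \<Sum>s\<in>S. h s x) = (\<Sum>s\<in>S. Phi F (h s))"
proof (induction S rule: finite_induct)
  case empty
  then show ?case using hom_const[of 0] ps_const_0 by simp
next
  case (insert s S)
  then show ?case using hom_add[of "h s" "\<lambda>x. \<Sum>s\<in>S. h s x"] pf_sum[of S h] by simp
qed

lemma hom_prod: "finite S \<Longrightarrow> (\<And>s. s \<in> S \<Longrightarrow> h s \<in> poly_fun) \<Longrightarrow> Phi F (\<lambda>x. \<Prod>s\<in>S. h s x) = (\<Prod>s\<in>S. Phi F (h s))"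
proof (induction S rule: finite_induct)
  case empty
  then show ?case using hom_const[of 1] ps_const_1 by simp
next
  case (insert s S)
  then show ?case using hom_mult[of "h s" "\<lambda>x. \<Prod>s\<in>S. h s x"] pf_prod[of S h] by simp
qed

lemma hom_pow: "f \<in> poly_fun \<Longrightarrow> Phi F (\<lambda>x. f x ^ n) = Phi F f ^ n"
proof (induction n)
  case 0
  then show ?case using hom_const[of 1] ps_const_1 by simp
next
  case (Suc n)
  then show ?case using hom_mult[of f "\<lambda>x. f x ^ n"] pf_pow[of f n] by simp
qed

lemma hom_neg: "f \<in> poly_fun \<Longrightarrow> Phi F (\<lambda>x. - f x) = - Phi F f"
proof -
  assume f: "f \<in> poly_fun"
  have "Phi F (\<lambda>x. - f x) = Phi F (\<lambda>x. (\<lambda>x. -1) x * f x)" by simp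
  also have "\<dots> = Phi F (\<lambda>x. -1) * Phi F f" by (rule hom_mult[OF poly_fun.const f])
  also have "\<dots> = - Phi F f" by (subst hom_const) (simp add: ps_const_m1)
  finally show ?thesis .
qed

lemma hom_scale_coeff: "f \<in> poly_fun \<Longrightarrow> F (\<lambda>x. c * f x) m = c * F f m"
proof -
  assume f: "f \<in> poly_fun"
  have "F (\<lambda>x. c * f x) = ps_mult (F (\<lambda>x. c)) (F f)"
  proof -
    have m: "\<forall>f\<in>poly_fun. \<forall>g\<in>poly_fun. F (\<lambda>x. f x * g x) = ps_mult (F f) (F g)"
      using F unfolding formal_morphism_def by blast
    show ?thesis using m[rule_format, of "\<lambda>x. c" f, OF poly_fun.const f] .
  qed
  also have "\<dots> = ps_mult (ps_const c) (F f)" using F unfolding formal_morphism_def by simp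
  finally show ?thesis by (simp add: ps_mult_const)
qed

end



lemma expand:
  fixes y :: "'a::comm_ring_1"
  assumes fin: "finite G"
  shows "(\<Prod>g\<in>G. y - z g) =
    (\<Sum>k\<in>{..card G}. (\<Sum>U\<in>{U\<in>Pow G. card U = k}. \<Prod>g\<in>U. - z g) * y ^ (card G - k))"
proof -
  have "(\<Prod>g\<in>G. y - z g) = (\<Prod>g\<in>G. (- z g) + y)" by simp
  also have "\<dots> = (\<Sum>U\<in>Pow G. (\<Prod>g\<in>U. - z g) * (\<Prod>g\<in>G - U. y))"
    by (rule prod_add[OF fin])
  also have "\<dots> = (\<Sum>U\<in>Pow G. (\<Prod>g\<in>U. - z g) * y ^ (card G - card U))"
    by (rule sum.cong[OF refl]) (auto simp: card_Diff_subset finite_subset[OF _ fin])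
  also have "\<dots> = (\<Sum>k\<in>{..card G}. \<Sum>U\<in>{U\<in>Pow G. card U = k}. (\<Prod>g\<in>U. - z g) * y ^ (card G - card U))"
    by (rule sum.group[symmetric]) (auto simp: fin card_mono)
  also have "\<dots> = (\<Sum>k\<in>{..card G}. (\<Sum>U\<in>{U\<in>Pow G. card U = k}. \<Prod>g\<in>U. - z g) * y ^ (card G - k))"
    by (rule sum.cong[OF refl]) (simp add: sum_distrib_right)
  finally show ?thesis .
qed

lemma pf_neg: "f \<in> poly_fun \<Longrightarrow> (\<lambda>x. - f x) \<in> poly_fun"
  using pf_scale[of f "-1"] by simp

lemma pf_prod_neg: "finite U \<Longrightarrow> (\<And>g. g \<in> U \<Longrightarrow> (\<lambda>x. f (g x)) \<in> poly_fun) \<Longrightarrow> (\<lambda>x. \<Prod>g\<in>U. - f (g x)) \<in> poly_fun"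
  using pf_prod[of U "\<lambda>g x. - f (g x)"] pf_neg by blast

lemma cf_sum: "cf (sum f A) m = (\<Sum>a\<in>A. cf (f a) m)"
  by (induction A rule: infinite_finite_induct) (auto simp: zero_mps_def plus_mps_def ps_add_def)

lemma per_f:
  fixes G :: "(('n::finite \<Rightarrow> complex) \<Rightarrow> ('n \<Rightarrow> complex)) set"
    and F1 F2 :: "(('n \<Rightarrow> complex) \<Rightarrow> complex) \<Rightarrow> ('p::finite) fps_multi"
  assumes G: "finite_GL_subgroup G"
    and F1: "formal_morphism F1" and F2: "formal_morphism F2"
    and inv: "\<forall>f\<in>invariants G. F1 f = F2 f"
    and f: "f \<in> poly_fun"
  shows "\<exists>g\<in>G. F2 f = F1 (\<lambda>x. f (g x))"
proof -
  have fin: "finite G" and lin: "\<And>g. g \<in> G \<Longrightarrow> clinear_map g" and bj: "\<And>g. g \<in> G \<Longrightarrow> bij g"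
    and idG: "id \<in> G" and cl: "\<And>g h. g \<in> G \<Longrightarrow> h \<in> G \<Longrightarrow> g \<circ> h \<in> G"
    and invG: "\<And>g. g \<in> G \<Longrightarrow> inv g \<in> G"
    using G unfolding finite_GL_subgroup_def by auto
  have fg: "\<And>g. g \<in> G \<Longrightarrow> (\<lambda>x. f (g x)) \<in> poly_fun" using pf_comp lin f by blast
  define N where "N = card G"
  define W where "W k = {U\<in>Pow G. card U = k}" for k
  have finW: "finite (W k)" for k unfolding W_def using fin by auto
  have WG: "U \<in> W k \<Longrightarrow> U \<subseteq> G" for U k unfolding W_def by auto
  define E where "E k = (\<lambda>x. \<Sum>U\<in>W k. \<Prod>g\<in>U. - f (g x))" for k
  have Epoly: "E k \<in> poly_fun" for k
    unfolding E_def
  proof (rule pf_sum[OF finW])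
    fix U assume "U \<in> W k"
    then have "U \<subseteq> G" by (rule WG)
    then show "(\<lambda>x. \<Prod>g\<in>U. - f (g x)) \<in> poly_fun"
      using pf_prod_neg[of U f] fin finite_subset fg by blast
  qed
  have Einv: "E k \<circ> h = E k" if h: "h \<in> G" for k h
  proof
    fix x
    define r where "r g = g \<circ> h" for g :: "('n \<Rightarrow> complex) \<Rightarrow> ('n \<Rightarrow> complex)"
    define r' where "r' g = g \<circ> inv h" for g :: "('n \<Rightarrow> complex) \<Rightarrow> ('n \<Rightarrow> complex)"
    have ih: "inv h \<circ> h = id" using bj[OF h] by (simp add: bij_is_inj)
    have hi: "h \<circ> inv h = id" using bj[OF h] by (simp add: bij_is_surj surj_f_inv_f fun_eq_iff)
    have rr: "r' (r g) = g" for g unfolding r_def r'_def by (simp add: comp_assoc hi)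
    have rr': "r (r' g) = g" for g unfolding r_def r'_def by (simp add: comp_assoc ih)
    have injr: "inj r"
    proof (rule injI)
      fix a b assume "r a = r b"
      then have "r' (r a) = r' (r b)" by simp
      then show "a = b" by (simp add: rr)
    qed
    have "(E k \<circ> h) x = (\<Sum>U\<in>W k. \<Prod>g\<in>U. - f (r g x))"
      by (simp add: E_def r_def)
    also have "\<dots> = (\<Sum>U\<in>W k. \<Prod>g\<in>U. - f (g x))"
    proof (rule sum.reindex_bij_witness[where j="\<lambda>U. r ` U" and i="\<lambda>U. r' ` U"])
      fix U assume U: "U \<in> W k"
      show "r' ` r ` U = U" using rr by (simp add: image_image)
      have "r ` U \<subseteq> G" using WG[OF U] cl h unfolding r_def by auto
      moreover have "card (r ` U) = card U" using injr by (simp add: card_image inj_on_subset)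
      ultimately show "r ` U \<in> W k" using U unfolding W_def by auto
      show "(\<Prod>g\<in>r ` U. - f (g x)) = (\<Prod>g\<in>U. - f (r g x))"
        using injr by (simp add: prod.reindex inj_on_subset)
    next
      fix U assume U: "U \<in> W k"
      show "r ` r' ` U = U" using rr' by (simp add: image_image)
      have "r' ` U \<subseteq> G" using WG[OF U] cl invG h unfolding r'_def by auto
      moreover have "inj r'"
      proof (rule injI)
        fix a b assume "r' a = r' b"
        then have "r (r' a) = r (r' b)" by simp
        then show "a = b" by (simp add: rr')
      qed
      then have "card (r' ` U) = card U" by (simp add: card_image inj_on_subset)
      ultimately show "r' ` U \<in> W k" using U unfolding W_def by auto
    qed
    also have "\<dots> = E k x" by (simp add: E_def)
    finally show "(E k \<circ> h) x = E k x" .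
  qed
  have Einvs: "F1 (E k) = F2 (E k)" for k
  proof -
    have "E k \<in> invariants G" unfolding invariants_def using Epoly Einv by blast
    then show ?thesis using inv by blast
  qed
  have zero: "(\<lambda>x. \<Sum>k\<in>{..N}. E k x * f x ^ (N - k)) = (\<lambda>x. 0)"
  proof
    fix x
    have "(\<Sum>k\<in>{..N}. E k x * f x ^ (N - k)) = (\<Prod>g\<in>G. f x - f (g x))"
      unfolding E_def W_def N_def by (rule expand[OF fin, symmetric])
    also have "\<dots> = 0" using idG by (auto simp: prod_zero_iff[OF fin] intro!: bexI[of _ id])
    finally show "(\<Sum>k\<in>{..N}. E k x * f x ^ (N - k)) = 0" .
  qed
  have "0 = Phi F2 (\<lambda>x. \<Sum>k\<in>{..N}. E k x * f x ^ (N - k))"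
    using hom_const[OF F2, of 0] ps_const_0 zero by simp
  also have "\<dots> = (\<Sum>k\<in>{..N}. Phi F2 (E k) * Phi F2 f ^ (N - k))"
  proof -
    have "Phi F2 (\<lambda>x. \<Sum>k\<in>{..N}. E k x * f x ^ (N - k)) = (\<Sum>k\<in>{..N}. Phi F2 (\<lambda>x. E k x * f x ^ (N - k)))"
      by (rule hom_sum[OF F2]) (simp_all add: poly_fun.mult[OF Epoly pf_pow[OF f]])
    also have "\<dots> = (\<Sum>k\<in>{..N}. Phi F2 (E k) * Phi F2 f ^ (N - k))"
      by (rule sum.cong[OF refl]) (simp add: hom_mult[OF F2 Epoly pf_pow[OF f]] hom_pow[OF F2 f])
    finally show ?thesis .
  qed
  also have "\<dots> = (\<Sum>k\<in>{..N}. Phi F1 (E k) * Phi F2 f ^ (N - k))"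
    by (simp add: Phi_def Einvs)
  also have "\<dots> = (\<Sum>k\<in>{..N}. (\<Sum>U\<in>W k. \<Prod>g\<in>U. - Phi F1 (\<lambda>x. f (g x))) * Phi F2 f ^ (N - k))"
  proof (rule sum.cong[OF refl])
    fix k
    have "Phi F1 (E k) = (\<Sum>U\<in>W k. Phi F1 (\<lambda>x. \<Prod>g\<in>U. - f (g x)))"
      unfolding E_def
    proof (rule hom_sum[OF F1 finW])
      fix U assume U: "U \<in> W k"
      have fU: "finite U" using WG[OF U] fin by (rule finite_subset)
      show "(\<lambda>x. \<Prod>g\<in>U. - f (g x)) \<in> poly_fun"
        by (rule pf_prod_neg[OF fU]) (rule fg, use WG[OF U] in auto)
    qed
    also have "\<dots> = (\<Sum>U\<in>W k. \<Prod>g\<in>U. - Phi F1 (\<lambda>x. f (g x)))"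
    proof (rule sum.cong[OF refl])
      fix U assume U: "U \<in> W k"
      have fU: "finite U" using WG[OF U] fin by (rule finite_subset)
      have "Phi F1 (\<lambda>x. \<Prod>g\<in>U. - f (g x)) = (\<Prod>g\<in>U. Phi F1 (\<lambda>x. - f (g x)))"
        by (rule hom_prod[OF F1 fU]) (rule pf_neg, rule fg, use WG[OF U] in auto)
      also have "\<dots> = (\<Prod>g\<in>U. - Phi F1 (\<lambda>x. f (g x)))"
        by (rule prod.cong[OF refl]) (rule hom_neg[OF F1], rule fg, use WG[OF U] in auto)
      finally show "Phi F1 (\<lambda>x. \<Prod>g\<in>U. - f (g x)) = (\<Prod>g\<in>U. - Phi F1 (\<lambda>x. f (g x)))" .
    qed
    finally show "Phi F1 (E k) * Phi F2 f ^ (N - k) = (\<Sum>U\<in>W k. \<Prod>g\<in>U. - Phi F1 (\<lambda>x. f (g x))) * Phi F2 f ^ (N - k)"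
      by simp
  qed
  also have "\<dots> = (\<Prod>g\<in>G. Phi F2 f - Phi F1 (\<lambda>x. f (g x)))"
    unfolding W_def N_def by (rule expand[OF fin, symmetric])
  finally have "(\<Prod>g\<in>G. Phi F2 f - Phi F1 (\<lambda>x. f (g x))) = 0" by (rule sym)
  then have "\<exists>g\<in>G. Phi F2 f - Phi F1 (\<lambda>x. f (g x)) = 0" by (simp only: prod_zero_iff[OF fin])
  then obtain g where "g \<in> G" "Phi F2 f - Phi F1 (\<lambda>x. f (g x)) = 0" by blast
  then show ?thesis by (auto simp: Phi_def)
qed



lemma coeff_lin:
  assumes F: "formal_morphism F" and S: "finite S" and u: "\<And>g. g \<in> S \<Longrightarrow> u g \<in> poly_fun"
  shows "F (\<lambda>x. \<Sum>g\<in>S. c g * u g x) m = (\<Sum>g\<in>S. c g * F (u g) m)"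
proof -
  have "F (\<lambda>x. \<Sum>g\<in>S. c g * u g x) m = cf (Phi F (\<lambda>x. \<Sum>g\<in>S. c g * u g x)) m"
    by (simp add: Phi_def)
  also have "\<dots> = cf (\<Sum>g\<in>S. Phi F (\<lambda>x. c g * u g x)) m"
    by (subst hom_sum[OF F S]) (simp_all add: pf_scale u)
  also have "\<dots> = (\<Sum>g\<in>S. F (\<lambda>x. c g * u g x) m)"
    by (simp add: cf_sum Phi_def)
  also have "\<dots> = (\<Sum>g\<in>S. c g * F (u g) m)"
    by (rule sum.cong[OF refl]) (simp add: hom_scale_coeff[OF F] u)
  finally show ?thesis .
qed

theorem corollary5p4:
  fixes G :: "(('n::finite \<Rightarrow> complex) \<Rightarrow> ('n \<Rightarrow> complex)) set"
    and F1 F2 :: "(('n \<Rightarrow> complex) \<Rightarrow> complex) \<Rightarrow> ('p::finite) fps_multi"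
  assumes "finite_GL_subgroup G"
    and "formal_morphism F1" and "formal_morphism F2"
    and "\<forall>f\<in>invariants G. F1 f = F2 f"
  shows "\<exists>g\<in>G. \<forall>f\<in>poly_fun. F2 f = F1 (pullback g f)"
proof (rule ccontr)
  assume neg: "\<not> ?thesis"
  note G = assms(1) and F1 = assms(2) and F2 = assms(3)
  have fin: "finite G" and lin: "\<And>g. g \<in> G \<Longrightarrow> clinear_map g"
    using G unfolding finite_GL_subgroup_def by auto
  have "\<forall>g\<in>G. \<exists>f. f \<in> poly_fun \<and> (\<exists>m. F2 f m \<noteq> F1 (\<lambda>x. f (g x)) m)"
    using neg by (simp add: pullback_def comp_def fun_eq_iff) blast
  from bchoice[OF this] obtain fc where
    fc: "\<forall>g\<in>G. fc g \<in> poly_fun \<and> (\<exists>m. F2 (fc g) m \<noteq> F1 (\<lambda>x. fc g (g x)) m)" by blast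
  then have "\<forall>g\<in>G. \<exists>m. F2 (fc g) m \<noteq> F1 (\<lambda>x. fc g (g x)) m" by blast
  from bchoice[OF this] obtain mc where
    mc: "\<forall>g\<in>G. F2 (fc g) (mc g) \<noteq> F1 (\<lambda>x. fc g (g x)) (mc g)" by blast
  have fcp: "\<And>g. g \<in> G \<Longrightarrow> fc g \<in> poly_fun" using fc by blast
  obtain idx :: "_ \<Rightarrow> nat" and n where idx: "idx ` G = {i. i < n}" "inj_on idx G"
    using finite_imp_inj_to_nat_seg[OF fin] by blast
  define d where "d g h = F2 (fc g) (mc h) - F1 (\<lambda>x. fc g (h x)) (mc h)" for g h
  define p where "p h = (\<Sum>g\<in>G. monom (d g h) (idx g))" for h
  have pnz: "p h \<noteq> 0" if h: "h \<in> G" for h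
  proof
    assume "p h = 0"
    then have "0 = coeff (p h) (idx h)" by simp
    also have "\<dots> = (\<Sum>g\<in>G. if idx g = idx h then d g h else 0)"
      by (simp add: p_def coeff_sum coeff_monom)
    also have "\<dots> = (\<Sum>g\<in>G. if g = h then d g h else 0)"
      by (rule sum.cong[OF refl]) (use idx(2) h in \<open>auto dest: inj_onD\<close>)
    also have "\<dots> = d h h" using h fin by (simp add: sum.delta)
    finally show False using mc h unfolding d_def by simp
  qed
  have "finite (\<Union>h\<in>G. {t. poly (p h) t = 0})"
    using poly_roots_finite pnz fin by blast
  then obtain t where "t \<notin> (\<Union>h\<in>G. {t. poly (p h) t = 0})"
    using ex_new_if_finite[OF infinite_UNIV_char_0] by blast
  then have t: "\<And>h. h \<in> G \<Longrightarrow> poly (p h) t \<noteq> 0" by blast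
  define f where "f = (\<lambda>x. \<Sum>g\<in>G. t ^ idx g * fc g x)"
  have fpoly: "f \<in> poly_fun" unfolding f_def
    by (rule pf_sum[OF fin]) (simp add: pf_scale fcp)
  obtain h where h: "h \<in> G" and eq: "F2 f = F1 (\<lambda>x. f (h x))"
    using per_f[OF G F1 F2 assms(4) fpoly] by blast
  have c2: "F2 f (mc h) = (\<Sum>g\<in>G. t ^ idx g * F2 (fc g) (mc h))"
    unfolding f_def by (rule coeff_lin[OF F2 fin fcp])
  have c1: "F1 (\<lambda>x. f (h x)) (mc h) = (\<Sum>g\<in>G. t ^ idx g * F1 (\<lambda>x. fc g (h x)) (mc h))"
    unfolding f_def by (rule coeff_lin[OF F1 fin]) (rule pf_comp[OF lin[OF h] fcp])
  have "poly (p h) t = (\<Sum>g\<in>G. d g h * t ^ idx g)"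
    by (simp add: p_def poly_sum poly_monom)
  also have "\<dots> = F2 f (mc h) - F1 (\<lambda>x. f (h x)) (mc h)"
    unfolding c1 c2 d_def by (simp add: sum_subtractf[symmetric] algebra_simps)
  also have "\<dots> = 0" using eq by simp
  finally show False using t[OF h] by simp
qed

end
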